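(* For all $\mu_1,\mu_2\in X$, we have $\mu_1\oplus_s\mu_2\subseteq\mu_1\oplus\mu_2\subseteq\mu_1\oplus_w\mu_2$.
   Context: Fix a set $\mathrm{Var}$ of variables; values are real numbers. For finite $S\subseteq\mathrm{Var}$, $\mathrm{Mem}[S]$ is the set of maps $S\to\mathbb{R}$, ordered pointwise; $p_A(m)$ is restriction to $A$. $\mathcal{D}(Y)$ is the set of countably supported probability distributions on $Y$; for $\mu\in\mathcal{D}(\mathrm{Mem}[S])$, $\mathrm{dom}(\mu)=S$ and $\pi_A\mu$ is the marginal on $A\subseteq S$. Let $X=\bigcup_{S\subseteq\mathrm{Var}\text{ finite}}\mathcal{D}(\mathrm{Mem}[S])$. Monotone = non-decreasing, antitone = non-increasing. A partition is a set of pairwise disjoint nonempty sets; $\mathcal{T}$ coarsens $\mathcal{S}$ if $\bigcup\mathcal{T}=\bigcup\mathcal{S}$ and each element of $\mathcal{T}$ is a union of a subfamily of $\mathcal{S}$. For a partition $\mathcal{S}$ with $\bigcup\mathcal{S}\subseteq\mathrm{dom}(\mu)$, $\mu$ is $\mathcal{S}$-PNA if for every $\mathcal{T}$ coarsening $\mathcal{S}$ and every family $(f_A:\mathrm{Mem}[A]\to[0,\infty))_{A\in\mathcal{T}}$ all monotone or all antitone, $\mathbb{E}_{m\sim\mu}[\prod_Af_A(p_Am)]\le\prod_A\mathbb{E}_{m\sim\mu}[f_A(p_Am)]$. For disjoint $A,B\subseteq\mathrm{dom}(\mu)$, $\mu$ is $(A,B)$-NA if for all $f:\mathrm{Mem}[A]\to\mathbb{R}$,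 $g:\mathrm{Mem}[B]\to\mathbb{R}$ both monotone or both antitone, each bounded below or bounded above, $\mathbb{E}[f(p_Am)g(p_Bm)]\le\mathbb{E}[f(p_Am)]\mathbb{E}[g(p_Bm)]$; $\mu$ satisfies strong NA if it is $(A,B)$-NA for all disjoint $A,B\subseteq\mathrm{dom}(\mu)$. For $\mu_1\in\mathcal{D}(\mathrm{Mem}[S])$, $\mu_2\in\mathcal{D}(\mathrm{Mem}[T])$: $\mu_1\oplus_s\mu_2$ is the set of $\mu\in\mathcal{D}(\mathrm{Mem}[S\cup T])$ satisfying strong NA with $\pi_S\mu=\mu_1$, $\pi_T\mu=\mu_2$, and $S\cap T=\emptyset$; $\mu_1\oplus_w\mu_2$ is the set of $\mu\in\mathcal{D}(\mathrm{Mem}[S\cup T])$ that are $(S,T)$-NA with $\pi_S\mu=\mu_1$, $\pi_T\mu=\mu_2$, $S\cap T=\emptyset$; and $\mu_1\oplus\mu_2$ is empty if $S\cap T\ne\emptyset$ and otherwise is the set of $\mu\in\mathcal{D}(\mathrm{Mem}[S\cup T])$ with $\pi_S\mu=\mu_1$, $\pi_T\mu=\mu_2$, such that $\mu$ is $(\mathcal{S}\cup\mathcal{T})$-PNA for all partitions $\mathcal{S}$ (of a subset of $S$) and $\mathcal{T}$ (of a subset of $T$) with $\mu_1$ $\mathcal{S}$-PNA and $\mu_2$ $\mathcal{T}$-PNA. *)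

theory Defs
  imports "HOL-Probability.Probability"
begin

text \<open>A memory on a finite set S of
variables is represented as a total function 'v => real which is 0 outside S;
Mem S is the set of such functions.  The order on memories is the pointwise order
(le_fun), which on Mem S coincides with the pointwise order on S.\<close>

definition Mem :: "'v set \<Rightarrow> ('v \<Rightarrow> real) set" where
  "Mem S = {m. \<forall>x. x \<notin> S \<longrightarrow> m x = 0}"

definition restr :: "'v set \<Rightarrow> ('v \<Rightarrow> real) \<Rightarrow> ('v \<Rightarrow> real)" where
  "restr A m = (\<lambda>x. if x \<in> A then m x else 0)"

text \<open>mu is a countably supported distribution on Mem[S] (S finite), i.e. dom(mu) = S.\<close>
definition is_dist :: "'v set \<Rightarrow> ('v \<Rightarrow> real) pmf \<Rightarrow> bool" where
  "is_dist S \<mu> \<longleftrightarrow> finite S \<and> set_pmf \<mu> \<subseteq> Mem S"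

definition marg :: "'v set \<Rightarrow> ('v \<Rightarrow> real) pmf \<Rightarrow> ('v \<Rightarrow> real) pmf" where
  "marg A \<mu> = map_pmf (restr A) \<mu>"

definition antimono_on' :: "('v \<Rightarrow> real) set \<Rightarrow> (('v \<Rightarrow> real) \<Rightarrow> real) \<Rightarrow> bool" where
  "antimono_on' D f \<longleftrightarrow> monotone_on D (\<le>) (\<ge>) f"

definition is_partition :: "'v set set \<Rightarrow> bool" where
  "is_partition P \<longleftrightarrow> (\<forall>A\<in>P. A \<noteq> {}) \<and> (\<forall>A\<in>P. \<forall>B\<in>P. A \<noteq> B \<longrightarrow> A \<inter> B = {})"

definition coarsens :: "'v set set \<Rightarrow> 'v set set \<Rightarrow> bool" where
  "coarsens T P \<longleftrightarrow> \<Union>T = \<Union>P \<and> (\<forall>A\<in>T. \<exists>Q\<subseteq>P. A = \<Union>Q)"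

text \<open>P-PNA for mu with dom(mu) = S.  Expectations of nonnegative functions are
taken as nonnegative (possibly infinite) integrals in ennreal.\<close>
definition PNA :: "'v set \<Rightarrow> ('v \<Rightarrow> real) pmf \<Rightarrow> 'v set set \<Rightarrow> bool" where
  "PNA S \<mu> P \<longleftrightarrow> is_partition P \<and> \<Union>P \<subseteq> S \<and>
     (\<forall>T f. is_partition T \<and> coarsens T P \<and>
        (\<forall>A\<in>T. \<forall>m\<in>Mem A. f A m \<ge> 0) \<and>
        ((\<forall>A\<in>T. mono_on (Mem A) (f A)) \<or> (\<forall>A\<in>T. antimono_on' (Mem A) (f A)))
      \<longrightarrow> (\<integral>\<^sup>+ m. (\<Prod>A\<in>T. ennreal (f A (restr A m))) \<partial>measure_pmf \<mu>)
          \<le> (\<Prod>A\<in>T. \<integral>\<^sup>+ m. ennreal (f A (restr A m)) \<partial>measure_pmf \<mu>))"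

text \<open>(A,B)-NA for mu with dom(mu) = S.  Expectations of real-valued functions are
Lebesgue integrals; the inequality is required whenever the expectations involved exist
(are finite).\<close>
definition NA :: "'v set \<Rightarrow> ('v \<Rightarrow> real) pmf \<Rightarrow> 'v set \<Rightarrow> 'v set \<Rightarrow> bool" where
  "NA S \<mu> A B \<longleftrightarrow> A \<subseteq> S \<and> B \<subseteq> S \<and> A \<inter> B = {} \<and>
     (\<forall>f g. ((mono_on (Mem A) f \<and> mono_on (Mem B) g) \<or>
             (antimono_on' (Mem A) f \<and> antimono_on' (Mem B) g)) \<and>
            (bdd_below (f ` Mem A) \<or> bdd_above (f ` Mem A)) \<and>
            (bdd_below (g ` Mem B) \<or> bdd_above (g ` Mem B)) \<and>
            integrable (measure_pmf \<mu>) (\<lambda>m. f (restr A m)) \<and>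
            integrable (measure_pmf \<mu>) (\<lambda>m. g (restr B m)) \<and>
            integrable (measure_pmf \<mu>) (\<lambda>m. f (restr A m) * g (restr B m))
        \<longrightarrow> measure_pmf.expectation \<mu> (\<lambda>m. f (restr A m) * g (restr B m))
            \<le> measure_pmf.expectation \<mu> (\<lambda>m. f (restr A m)) *
              measure_pmf.expectation \<mu> (\<lambda>m. g (restr B m)))"

definition strong_NA :: "'v set \<Rightarrow> ('v \<Rightarrow> real) pmf \<Rightarrow> bool" where
  "strong_NA S \<mu> \<longleftrightarrow> (\<forall>A B. A \<subseteq> S \<and> B \<subseteq> S \<and> A \<inter> B = {} \<longrightarrow> NA S \<mu> A B)"

definition oplus_s :: "'v set \<Rightarrow> ('v \<Rightarrow> real) pmf \<Rightarrow> 'v set \<Rightarrow> ('v \<Rightarrow> real) pmf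
    \<Rightarrow> ('v \<Rightarrow> real) pmf set" where
  "oplus_s S \<mu>1 T \<mu>2 = {\<mu>. is_dist (S \<union> T) \<mu> \<and> strong_NA (S \<union> T) \<mu> \<and>
       marg S \<mu> = \<mu>1 \<and> marg T \<mu> = \<mu>2 \<and> S \<inter> T = {}}"

definition oplus_w :: "'v set \<Rightarrow> ('v \<Rightarrow> real) pmf \<Rightarrow> 'v set \<Rightarrow> ('v \<Rightarrow> real) pmf
    \<Rightarrow> ('v \<Rightarrow> real) pmf set" where
  "oplus_w S \<mu>1 T \<mu>2 = {\<mu>. is_dist (S \<union> T) \<mu> \<and> NA (S \<union> T) \<mu> S T \<and>
       marg S \<mu> = \<mu>1 \<and> marg T \<mu> = \<mu>2 \<and> S \<inter> T = {}}"

definition oplus :: "'v set \<Rightarrow> ('v \<Rightarrow> real) pmf \<Rightarrow> 'v set \<Rightarrow> ('v \<Rightarrow> real) pmf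
    \<Rightarrow> ('v \<Rightarrow> real) pmf set" where
  "oplus S \<mu>1 T \<mu>2 = (if S \<inter> T \<noteq> {} then {} else
     {\<mu>. is_dist (S \<union> T) \<mu> \<and> marg S \<mu> = \<mu>1 \<and> marg T \<mu> = \<mu>2 \<and>
         (\<forall>P Q. is_partition P \<and> \<Union>P \<subseteq> S \<and> is_partition Q \<and> \<Union>Q \<subseteq> T \<and>
                PNA S \<mu>1 P \<and> PNA T \<mu>2 Q \<longrightarrow> PNA (S \<union> T) \<mu> (P \<union> Q))})"

end

theory Submission
  imports Defs
begin



lemma restr_Mem[simp]: "restr A m \<in> Mem A"
  by (simp add: restr_def Mem_def)

lemma restr_mono: "x \<le> y \<Longrightarrow> restr A x \<le> restr A y"
  by (simp add: restr_def le_fun_def)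

lemma restr_restr: "A \<subseteq> B \<Longrightarrow> restr A (restr B m) = restr A m"
  by (auto simp: restr_def fun_eq_iff)

lemma pmf_integrable_bound:
  fixes f :: "'a \<Rightarrow> real"
  assumes "\<And>x. \<bar>f x\<bar> \<le> B"
  shows "integrable (measure_pmf \<mu>) f"
  by (rule measure_pmf.integrable_const_bound[where B=B]) (use assms in auto)

definition cl :: "nat \<Rightarrow> real \<Rightarrow> real" where "cl n x = min (max x 0) (real n)"

lemma cl_mono: "x \<le> y \<Longrightarrow> cl n x \<le> cl n y" by (simp add: cl_def)
lemma cl_nn: "0 \<le> cl n x" by (simp add: cl_def)
lemma cl_le: "cl n x \<le> real n" by (simp add: cl_def)
lemma cl_le_x: "0 \<le> x \<Longrightarrow> cl n x \<le> x" by (simp add: cl_def)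
lemma cl_inc: "n \<le> k \<Longrightarrow> cl n x \<le> cl k x" by (simp add: cl_def)
lemma cl_eq: "0 \<le> x \<Longrightarrow> x \<le> real n \<Longrightarrow> cl n x = x" by (simp add: cl_def)

lemma SUP_evconst:
  fixes h :: "nat \<Rightarrow> ennreal"
  assumes "\<And>n. h n \<le> c" "h N = c"
  shows "(SUP n. h n) = c"
  by (metis SUP_upper UNIV_I antisym assms SUP_least)

lemma L1:
  fixes F G :: "('v \<Rightarrow> real) \<Rightarrow> real"
  assumes NA: "NA D \<mu> A B"
  and F0: "\<forall>m\<in>Mem A. F m \<ge> 0" and G0: "\<forall>m\<in>Mem B. G m \<ge> 0"
  and mono: "(mono_on (Mem A) F \<and> mono_on (Mem B) G) \<or> (antimono_on' (Mem A) F \<and> antimono_on' (Mem B) G)"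
  shows "(\<integral>\<^sup>+m. ennreal (F (restr A m)) * ennreal (G (restr B m)) \<partial>measure_pmf \<mu>)
     \<le> (\<integral>\<^sup>+m. ennreal (F (restr A m)) \<partial>measure_pmf \<mu>) * (\<integral>\<^sup>+m. ennreal (G (restr B m)) \<partial>measure_pmf \<mu>)"
proof -
  define Fn where "Fn n x = cl n (F x)" for n x
  define Gn where "Gn n x = cl n (G x)" for n x
  define h where "h n m = ennreal (Fn n (restr A m)) * ennreal (Gn n (restr B m))" for n m
  let ?R = "(\<integral>\<^sup>+m. ennreal (F (restr A m)) \<partial>measure_pmf \<mu>) * (\<integral>\<^sup>+m. ennreal (G (restr B m)) \<partial>measure_pmf \<mu>)"
  have step: "(\<integral>\<^sup>+m. h n m \<partial>measure_pmf \<mu>) \<le> ?R" for n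
  proof -
    have mo: "(mono_on (Mem A) (Fn n) \<and> mono_on (Mem B) (Gn n)) \<or> (antimono_on' (Mem A) (Fn n) \<and> antimono_on' (Mem B) (Gn n))"
      using mono unfolding antimono_on'_def monotone_on_def Fn_def Gn_def by (auto intro: cl_mono)
    have bd: "bdd_below (Fn n ` Mem A)" "bdd_below (Gn n ` Mem B)"
      by (auto simp: Fn_def Gn_def intro!: bdd_belowI[where m=0] cl_nn)
    have i1: "integrable (measure_pmf \<mu>) (\<lambda>m. Fn n (restr A m))"
      by (rule pmf_integrable_bound[where B="real n"]) (simp add: Fn_def cl_nn cl_le)
    have i2: "integrable (measure_pmf \<mu>) (\<lambda>m. Gn n (restr B m))"
      by (rule pmf_integrable_bound[where B="real n"]) (simp add: Gn_def cl_nn cl_le)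
    have i3: "integrable (measure_pmf \<mu>) (\<lambda>m. Fn n (restr A m) * Gn n (restr B m))"
      by (rule pmf_integrable_bound[where B="real n * real n"])
         (simp add: Fn_def Gn_def cl_nn cl_le abs_mult mult_mono)
    have ineq: "measure_pmf.expectation \<mu> (\<lambda>m. Fn n (restr A m) * Gn n (restr B m))
            \<le> measure_pmf.expectation \<mu> (\<lambda>m. Fn n (restr A m)) *
              measure_pmf.expectation \<mu> (\<lambda>m. Gn n (restr B m))"
      using NA mo bd i1 i2 i3 unfolding NA_def by blast
    have e3: "(\<integral>\<^sup>+m. h n m \<partial>measure_pmf \<mu>) = ennreal (measure_pmf.expectation \<mu> (\<lambda>m. Fn n (restr A m) * Gn n (restr B m)))"
      unfolding h_def using i3
      by (subst ennreal_mult[symmetric]) (auto simp: Fn_def Gn_def cl_nn intro!: nn_integral_eq_integral)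
    have e1: "(\<integral>\<^sup>+m. ennreal (Fn n (restr A m)) \<partial>measure_pmf \<mu>) = ennreal (measure_pmf.expectation \<mu> (\<lambda>m. Fn n (restr A m)))"
      using i1 by (auto simp: Fn_def cl_nn intro!: nn_integral_eq_integral)
    have e2: "(\<integral>\<^sup>+m. ennreal (Gn n (restr B m)) \<partial>measure_pmf \<mu>) = ennreal (measure_pmf.expectation \<mu> (\<lambda>m. Gn n (restr B m)))"
      using i2 by (auto simp: Gn_def cl_nn intro!: nn_integral_eq_integral)
    have p1: "0 \<le> measure_pmf.expectation \<mu> (\<lambda>m. Fn n (restr A m))"
      by (auto simp: Fn_def cl_nn)
    have p2: "0 \<le> measure_pmf.expectation \<mu> (\<lambda>m. Gn n (restr B m))"
      by (auto simp: Gn_def cl_nn)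
    have "(\<integral>\<^sup>+m. h n m \<partial>measure_pmf \<mu>) \<le> (\<integral>\<^sup>+m. ennreal (Fn n (restr A m)) \<partial>measure_pmf \<mu>) * (\<integral>\<^sup>+m. ennreal (Gn n (restr B m)) \<partial>measure_pmf \<mu>)"
      unfolding e1 e2 e3 using ineq p1 p2 by (simp add: ennreal_mult[symmetric] ennreal_leI)
    also have "\<dots> \<le> ?R"
      apply (intro mult_mono nn_integral_mono)
      using F0 G0 by (auto simp: Fn_def Gn_def cl_le_x)
    finally show ?thesis .
  qed
  have inc: "incseq h"
    by (auto simp: incseq_def le_fun_def h_def Fn_def Gn_def intro!: mult_mono ennreal_leI cl_inc)
  have sup: "(SUP n. h n m) = ennreal (F (restr A m)) * ennreal (G (restr B m))" for m
  proof -
    obtain N :: nat where N: "max (F (restr A m)) (G (restr B m)) \<le> real N"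
      using real_arch_simple by blast
    show ?thesis
    proof (rule SUP_evconst[where N=N])
    show "h n m \<le> ennreal (F (restr A m)) * ennreal (G (restr B m))" for n
      using F0 G0 by (auto simp: h_def Fn_def Gn_def intro!: mult_mono ennreal_leI cl_le_x)
    show "h N m = ennreal (F (restr A m)) * ennreal (G (restr B m))"
      using F0 G0 N by (auto simp: h_def Fn_def Gn_def cl_eq)
  qed
  qed
  have "(\<integral>\<^sup>+m. ennreal (F (restr A m)) * ennreal (G (restr B m)) \<partial>measure_pmf \<mu>) = (\<integral>\<^sup>+m. (SUP n. h n m) \<partial>measure_pmf \<mu>)"
    by (simp add: sup)
  also have "\<dots> = (SUP n. \<integral>\<^sup>+m. h n m \<partial>measure_pmf \<mu>)"
    by (rule nn_integral_monotone_convergence_SUP[OF inc]) simp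
  also have "\<dots> \<le> ?R" by (rule SUP_least) (rule step)
  finally show ?thesis .
qed




lemma mono_restr: "mono_on (Mem A) f \<Longrightarrow> x \<le> y \<Longrightarrow> f (restr A x) \<le> f (restr A y)"
  by (simp add: monotone_on_def restr_mono)

lemma anti_restr: "antimono_on' (Mem A) f \<Longrightarrow> x \<le> y \<Longrightarrow> f (restr A x) \<ge> f (restr A y)"
  by (simp add: monotone_on_def antimono_on'_def restr_mono)

lemma L3:
  fixes f :: "'v set \<Rightarrow> ('v \<Rightarrow> real) \<Rightarrow> real"
  assumes sNA: "strong_NA D \<mu>" and fin: "finite Tf"
  and disj: "\<forall>A\<in>Tf. \<forall>B\<in>Tf. A \<noteq> B \<longrightarrow> A \<inter> B = {}" and sub: "\<Union>Tf \<subseteq> D"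
  and nn: "\<forall>A\<in>Tf. \<forall>m\<in>Mem A. f A m \<ge> 0"
  and mono: "(\<forall>A\<in>Tf. mono_on (Mem A) (f A)) \<or> (\<forall>A\<in>Tf. antimono_on' (Mem A) (f A))"
  shows "(\<integral>\<^sup>+ m. (\<Prod>A\<in>Tf. ennreal (f A (restr A m))) \<partial>measure_pmf \<mu>)
          \<le> (\<Prod>A\<in>Tf. \<integral>\<^sup>+ m. ennreal (f A (restr A m)) \<partial>measure_pmf \<mu>)"
  using fin disj sub nn mono
proof (induction Tf rule: finite_induct)
  case empty
  then show ?case by (simp add: measure_pmf.emeasure_space_1)
next
  case (insert A T')
  define B where "B = \<Union>T'"
  define G where "G x = (\<Prod>A'\<in>T'. f A' (restr A' x))" for x
  have dA: "A \<inter> A' = {}" if "A' \<in> T'" for A'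
  proof -
    have "A \<noteq> A'" using that insert.hyps(2) by blast
    then show ?thesis using insert.prems(1)[rule_format, OF insertI1 insertI2[OF that]] by simp
  qed
  have AB: "A \<inter> B = {}" unfolding B_def using dA by blast
  have NA: "NA D \<mu> A B" using sNA AB insert.prems(2) unfolding strong_NA_def B_def by auto
  have G0: "\<forall>m\<in>Mem B. G m \<ge> 0"
    using insert.prems(3) by (auto simp: G_def intro!: prod_nonneg)
  have GB: "G (restr B m) = (\<Prod>A'\<in>T'. f A' (restr A' m))" for m
    unfolding G_def B_def by (intro prod.cong refl) (simp add: restr_restr Union_upper)
  have prodeq: "(\<Prod>A\<in>insert A T'. ennreal (f A (restr A m))) = ennreal (f A (restr A m)) * ennreal (G (restr B m))" for m
    using insert.hyps insert.prems(3) by (simp add: GB prod_ennreal)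
  have Geq: "(\<integral>\<^sup>+m. ennreal (G (restr B m)) \<partial>measure_pmf \<mu>) = (\<integral>\<^sup>+ m. (\<Prod>A\<in>T'. ennreal (f A (restr A m))) \<partial>measure_pmf \<mu>)"
    using insert.prems(3) by (simp add: GB prod_ennreal)
  have monoG: "(mono_on (Mem A) (f A) \<and> mono_on (Mem B) G) \<or> (antimono_on' (Mem A) (f A) \<and> antimono_on' (Mem B) G)"
  proof (cases "\<forall>A\<in>insert A T'. mono_on (Mem A) (f A)")
    case True
    have "mono_on (Mem B) G"
    proof (rule monotone_onI)
      fix x y assume "x \<in> Mem B" "y \<in> Mem B" "x \<le> y"
      then show "G x \<le> G y" unfolding G_def
        using True insert.prems(3)
        by (intro prod_mono) (auto intro: mono_restr)
    qed
    then show ?thesis using True by auto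
  next
    case False
    then have T: "\<forall>A\<in>insert A T'. antimono_on' (Mem A) (f A)" using insert.prems(4) by blast
    have "antimono_on' (Mem B) G" unfolding antimono_on'_def
    proof (rule monotone_onI)
      fix x y assume "x \<in> Mem B" "y \<in> Mem B" "x \<le> y"
      then show "G x \<ge> G y" unfolding G_def
        using T insert.prems(3)
        by (intro prod_mono) (auto intro: anti_restr)
    qed
    then show ?thesis using T by auto
  qed
  have d1: "\<forall>A\<in>T'. \<forall>B\<in>T'. A \<noteq> B \<longrightarrow> A \<inter> B = {}"
  proof (intro ballI impI)
    fix A' B' assume a: "A' \<in> T'" "B' \<in> T'" "A' \<noteq> B'"
    show "A' \<inter> B' = {}" by (rule insert.prems(1)[rule_format, OF insertI2[OF a(1)] insertI2[OF a(2)] a(3)])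
  qed
  have d2: "\<Union>T' \<subseteq> D" using insert.prems(2) by simp
  have d3: "\<forall>A\<in>T'. \<forall>m\<in>Mem A. f A m \<ge> 0"
    using insert.prems(3) by simp
  have d4: "(\<forall>A\<in>T'. mono_on (Mem A) (f A)) \<or> (\<forall>A\<in>T'. antimono_on' (Mem A) (f A))"
    using insert.prems(4) by (simp add: ball_simps) blast
  note IH = insert.IH[OF d1 d2 d3 d4]
  have "(\<integral>\<^sup>+ m. (\<Prod>A\<in>insert A T'. ennreal (f A (restr A m))) \<partial>measure_pmf \<mu>)
     = (\<integral>\<^sup>+m. ennreal (f A (restr A m)) * ennreal (G (restr B m)) \<partial>measure_pmf \<mu>)"
    by (simp add: prodeq)
  also have "\<dots> \<le> (\<integral>\<^sup>+m. ennreal (f A (restr A m)) \<partial>measure_pmf \<mu>) * (\<integral>\<^sup>+m. ennreal (G (restr B m)) \<partial>measure_pmf \<mu>)"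
    using insert.prems(3) by (intro L1[OF NA _ G0 monoG]) auto
  also have "\<dots> \<le> (\<integral>\<^sup>+m. ennreal (f A (restr A m)) \<partial>measure_pmf \<mu>) * (\<Prod>A\<in>T'. \<integral>\<^sup>+ m. ennreal (f A (restr A m)) \<partial>measure_pmf \<mu>)"
    unfolding Geq by (intro mult_left_mono IH) auto
  also have "\<dots> = (\<Prod>A\<in>insert A T'. \<integral>\<^sup>+ m. ennreal (f A (restr A m)) \<partial>measure_pmf \<mu>)"
    using insert.hyps by simp
  finally show ?case .
qed




lemma part_ne: "is_partition P \<Longrightarrow> A \<in> P \<Longrightarrow> A \<noteq> {}"
  by (simp add: is_partition_def)
lemma part_disj: "is_partition P \<Longrightarrow> A \<in> P \<Longrightarrow> B \<in> P \<Longrightarrow> A \<noteq> B \<Longrightarrow> A \<inter> B = {}"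
  by (simp add: is_partition_def)

lemma part1:
  assumes "\<mu> \<in> oplus_s S \<mu>1 T \<mu>2"
  shows "\<mu> \<in> oplus S \<mu>1 T \<mu>2"
proof -
  from assms have d: "is_dist (S \<union> T) \<mu>" and s: "strong_NA (S \<union> T) \<mu>" and m: "marg S \<mu> = \<mu>1" "marg T \<mu> = \<mu>2"
    and st: "S \<inter> T = {}" by (auto simp: oplus_s_def)
  have "PNA (S \<union> T) \<mu> (P \<union> Q)" if P: "is_partition P" "\<Union>P \<subseteq> S" and Q: "is_partition Q" "\<Union>Q \<subseteq> T" for P Q
  proof -
    have part: "is_partition (P \<union> Q)"
      unfolding is_partition_def
    proof (intro conjI ballI impI)
      fix A assume A: "A \<in> P \<union> Q"
      show "A \<noteq> {}"
      proof (cases "A \<in> P")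
        case True then show ?thesis using part_ne[OF P(1)] by simp
      next
        case False then have "A \<in> Q" using A by simp
        then show ?thesis using part_ne[OF Q(1)] by simp
      qed
    next
      fix A B assume AB: "A \<in> P \<union> Q" "B \<in> P \<union> Q" "A \<noteq> B"
      have PS: "X \<subseteq> S" if "X \<in> P" for X using Union_upper[OF that] P(2) by (rule order_trans)
      have QT: "X \<subseteq> T" if "X \<in> Q" for X using Union_upper[OF that] Q(2) by (rule order_trans)
      have PP: "X \<inter> Y = {}" if "X \<in> P" "Y \<in> Q" for X Y
      proof -
        have "X \<inter> Y \<subseteq> S \<inter> T" using PS[OF that(1)] QT[OF that(2)] by (rule Int_mono)
        then show ?thesis using st by simp
      qed
      show "A \<inter> B = {}"
      proof (cases "A \<in> P")
        case True
        show ?thesis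
        proof (cases "B \<in> P")
          case True2: True then show ?thesis using part_disj[OF P(1) True True2 AB(3)] by simp
        next
          case False then have "B \<in> Q" using AB(2) by simp
          then show ?thesis using PP[OF True] by simp
        qed
      next
        case False
        then have A: "A \<in> Q" using AB(1) by simp
        show ?thesis
        proof (cases "B \<in> P")
          case True then show ?thesis using PP[OF True A] by (simp add: Int_commute)
        next
          case False then have "B \<in> Q" using AB(2) by simp
          then show ?thesis using part_disj[OF Q(1) A _ AB(3)] by simp
        qed
      qed
    qed
    have sub: "\<Union>(P \<union> Q) \<subseteq> S \<union> T" using P Q by blast
    show ?thesis unfolding PNA_def
    proof (intro conjI allI impI)
      show "is_partition (P \<union> Q)" by (rule part)
      show "\<Union>(P \<union> Q) \<subseteq> S \<union> T" by (rule sub)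
    next
      fix T' f
      assume h: "is_partition T' \<and> coarsens T' (P \<union> Q) \<and>
        (\<forall>A\<in>T'. \<forall>m\<in>Mem A. f A m \<ge> 0) \<and>
        ((\<forall>A\<in>T'. mono_on (Mem A) (f A)) \<or> (\<forall>A\<in>T'. antimono_on' (Mem A) (f A)))"
      show "(\<integral>\<^sup>+ m. (\<Prod>A\<in>T'. ennreal (f A (restr A m))) \<partial>measure_pmf \<mu>)
          \<le> (\<Prod>A\<in>T'. \<integral>\<^sup>+ m. ennreal (f A (restr A m)) \<partial>measure_pmf \<mu>)"
      proof (cases "finite T'")
        case True
        show ?thesis
        proof (rule L3[OF s True])
          show "\<forall>A\<in>T'. \<forall>B\<in>T'. A \<noteq> B \<longrightarrow> A \<inter> B = {}"
            using h part_disj[of T'] by blast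
          have "coarsens T' (P \<union> Q)" using h by simp
          then have "\<Union>T' = \<Union>(P \<union> Q)" unfolding coarsens_def by (rule conjunct1)
          then show "\<Union>T' \<subseteq> S \<union> T" using sub by simp
          show "\<forall>A\<in>T'. \<forall>m\<in>Mem A. f A m \<ge> 0" using h by blast
          show "(\<forall>A\<in>T'. mono_on (Mem A) (f A)) \<or> (\<forall>A\<in>T'. antimono_on' (Mem A) (f A))" using h by blast
        qed
      next
        case False
        then show ?thesis by (simp add: measure_pmf.emeasure_space_1)
      qed
    qed
  qed
  then have "\<forall>P Q. is_partition P \<and> \<Union>P \<subseteq> S \<and> is_partition Q \<and> \<Union>Q \<subseteq> T \<and>
                PNA S \<mu>1 P \<and> PNA T \<mu>2 Q \<longrightarrow> PNA (S \<union> T) \<mu> (P \<union> Q)" by blast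
  then show ?thesis using d m st unfolding oplus_def by simp
qed




lemma PNA_single:
  assumes "A \<noteq> {}" "A \<subseteq> S"
  shows "PNA S \<mu> {A}"
  unfolding PNA_def
proof (intro conjI allI impI)
  show "is_partition {A}" using assms(1) by (simp add: is_partition_def)
  show "\<Union>{A} \<subseteq> S" using assms(2) by simp
  fix T' :: "'a set set" and f
  assume h: "is_partition T' \<and> coarsens T' {A} \<and>
        (\<forall>A\<in>T'. \<forall>m\<in>Mem A. f A m \<ge> 0) \<and>
        ((\<forall>A\<in>T'. mono_on (Mem A) (f A)) \<or> (\<forall>A\<in>T'. antimono_on' (Mem A) (f A)))"
  from h have h1: "is_partition T'" by (rule conjunct1)
  from h have h2: "coarsens T' {A}" by (elim conjE)
  have sub: "T' \<subseteq> {A}"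
  proof
    fix X assume X: "X \<in> T'"
    have c2: "\<forall>X\<in>T'. \<exists>Q\<subseteq>{A}. X = \<Union>Q" using h2 unfolding coarsens_def by (rule conjunct2)
    obtain Q where Q: "Q \<subseteq> {A}" "X = \<Union>Q" using bspec[OF c2 X] by metis
    have "X \<noteq> {}" using part_ne[OF h1 X] .
    then have "Q = {A}" using Q by auto
    then show "X \<in> {A}" using Q by simp
  qed
  have "\<Union>T' = A" using h2 unfolding coarsens_def by simp
  then have "T' = {A}" using sub assms(1) by auto
  then show "(\<integral>\<^sup>+ m. (\<Prod>A\<in>T'. ennreal (f A (restr A m))) \<partial>measure_pmf \<mu>)
          \<le> (\<Prod>A\<in>T'. \<integral>\<^sup>+ m. ennreal (f A (restr A m)) \<partial>measure_pmf \<mu>)" by simp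
qed

lemma PNA_D:
  assumes "PNA S \<mu> P" "is_partition T" "coarsens T P" "\<forall>A\<in>T. \<forall>m\<in>Mem A. f A m \<ge> 0"
    "(\<forall>A\<in>T. mono_on (Mem A) (f A)) \<or> (\<forall>A\<in>T. antimono_on' (Mem A) (f A))"
  shows "(\<integral>\<^sup>+ m. (\<Prod>A\<in>T. ennreal (f A (restr A m))) \<partial>measure_pmf \<mu>)
          \<le> (\<Prod>A\<in>T. \<integral>\<^sup>+ m. ennreal (f A (restr A m)) \<partial>measure_pmf \<mu>)"
proof -
  have "\<forall>T f. is_partition T \<and> coarsens T P \<and>
        (\<forall>A\<in>T. \<forall>m\<in>Mem A. f A m \<ge> 0) \<and>
        ((\<forall>A\<in>T. mono_on (Mem A) (f A)) \<or> (\<forall>A\<in>T. antimono_on' (Mem A) (f A)))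
      \<longrightarrow> (\<integral>\<^sup>+ m. (\<Prod>A\<in>T. ennreal (f A (restr A m))) \<partial>measure_pmf \<mu>)
          \<le> (\<Prod>A\<in>T. \<integral>\<^sup>+ m. ennreal (f A (restr A m)) \<partial>measure_pmf \<mu>)"
    using assms(1) unfolding PNA_def by (elim conjE)
  from this[THEN spec[of _ T], THEN spec[of _ f]] show ?thesis
    by (rule mp[OF _ conjI[OF assms(2) conjI[OF assms(3) conjI[OF assms(4) assms(5)]]]])
qed

lemma K:
  fixes F G :: "('v \<Rightarrow> real) \<Rightarrow> real"
  assumes P: "PNA D \<mu> {A, B}" and AB: "A \<noteq> B"
  and F0: "\<forall>m\<in>Mem A. F m \<ge> 0" and G0: "\<forall>m\<in>Mem B. G m \<ge> 0"
  and mono: "(mono_on (Mem A) F \<and> mono_on (Mem B) G) \<or> (antimono_on' (Mem A) F \<and> antimono_on' (Mem B) G)"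
  shows "(\<integral>\<^sup>+m. ennreal (F (restr A m)) * ennreal (G (restr B m)) \<partial>measure_pmf \<mu>)
     \<le> (\<integral>\<^sup>+m. ennreal (F (restr A m)) \<partial>measure_pmf \<mu>) * (\<integral>\<^sup>+m. ennreal (G (restr B m)) \<partial>measure_pmf \<mu>)"
proof -
  define ff where "ff X = (if X = A then F else G)" for X
  have part: "is_partition {A, B}" using P unfolding PNA_def by (rule conjunct1)
  have co: "coarsens {A, B} {A, B}" unfolding coarsens_def
  proof (intro conjI ballI)
    show "\<Union>{A, B} = \<Union>{A, B}" ..
    fix X assume "X \<in> {A, B}" then show "\<exists>Q\<subseteq>{A, B}. X = \<Union>Q" by (intro exI[of _ "{X}"]) auto
  qed
  have nn: "\<forall>X\<in>{A, B}. \<forall>m\<in>Mem X. ff X m \<ge> 0" using F0 G0 AB by (auto simp: ff_def)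
  have mo: "(\<forall>X\<in>{A, B}. mono_on (Mem X) (ff X)) \<or> (\<forall>X\<in>{A, B}. antimono_on' (Mem X) (ff X))"
    using mono AB by (auto simp: ff_def)
  have "(\<integral>\<^sup>+ m. (\<Prod>X\<in>{A, B}. ennreal (ff X (restr X m))) \<partial>measure_pmf \<mu>)
          \<le> (\<Prod>X\<in>{A, B}. \<integral>\<^sup>+ m. ennreal (ff X (restr X m)) \<partial>measure_pmf \<mu>)"
    by (rule PNA_D[OF P part co nn mo])
  then show ?thesis using AB by (simp add: ff_def)
qed

lemma Kreal:
  fixes F G :: "('v \<Rightarrow> real) \<Rightarrow> real"
  assumes P: "PNA D \<mu> {A, B}" and AB: "A \<noteq> B"
  and F0: "\<And>m. F m \<ge> 0" and G0: "\<And>m. G m \<ge> 0"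
  and Fb: "\<And>m. F m \<le> c" and Gb: "\<And>m. G m \<le> c"
  and mono: "(mono_on (Mem A) F \<and> mono_on (Mem B) G) \<or> (antimono_on' (Mem A) F \<and> antimono_on' (Mem B) G)"
  shows "measure_pmf.expectation \<mu> (\<lambda>m. F (restr A m) * G (restr B m))
            \<le> measure_pmf.expectation \<mu> (\<lambda>m. F (restr A m)) *
              measure_pmf.expectation \<mu> (\<lambda>m. G (restr B m))"
proof -
  have i1: "integrable (measure_pmf \<mu>) (\<lambda>m. F (restr A m))"
    by (rule pmf_integrable_bound[where B=c]) (use F0 Fb in \<open>simp add: abs_le_iff\<close>)
  have i2: "integrable (measure_pmf \<mu>) (\<lambda>m. G (restr B m))"
    by (rule pmf_integrable_bound[where B=c]) (use G0 Gb in \<open>simp add: abs_le_iff\<close>)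
  have i3: "integrable (measure_pmf \<mu>) (\<lambda>m. F (restr A m) * G (restr B m))"
    by (rule pmf_integrable_bound[where B="c * c"]) (use F0 Fb G0 Gb in \<open>simp add: abs_mult mult_mono'\<close>)
  have e3: "(\<integral>\<^sup>+m. ennreal (F (restr A m)) * ennreal (G (restr B m)) \<partial>measure_pmf \<mu>) = ennreal (measure_pmf.expectation \<mu> (\<lambda>m. F (restr A m) * G (restr B m)))"
    using i3 by (subst ennreal_mult[symmetric]) (auto simp: F0 G0 intro!: nn_integral_eq_integral)
  have e1: "(\<integral>\<^sup>+m. ennreal (F (restr A m)) \<partial>measure_pmf \<mu>) = ennreal (measure_pmf.expectation \<mu> (\<lambda>m. F (restr A m)))"
    using i1 by (auto simp: F0 intro!: nn_integral_eq_integral)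
  have e2: "(\<integral>\<^sup>+m. ennreal (G (restr B m)) \<partial>measure_pmf \<mu>) = ennreal (measure_pmf.expectation \<mu> (\<lambda>m. G (restr B m)))"
    using i2 by (auto simp: G0 intro!: nn_integral_eq_integral)
  have p1: "0 \<le> measure_pmf.expectation \<mu> (\<lambda>m. F (restr A m))" by (simp add: F0)
  have p2: "0 \<le> measure_pmf.expectation \<mu> (\<lambda>m. G (restr B m))" by (simp add: G0)
  have "ennreal (measure_pmf.expectation \<mu> (\<lambda>m. F (restr A m) * G (restr B m)))
      \<le> ennreal (measure_pmf.expectation \<mu> (\<lambda>m. F (restr A m)) * measure_pmf.expectation \<mu> (\<lambda>m. G (restr B m)))"
    using K[OF P AB _ _ mono] F0 G0 unfolding e1 e2 e3 by (simp add: ennreal_mult p1 p2)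
  then show ?thesis using p1 p2 by (simp add: ennreal_le_iff)
qed




definition cl2 :: "nat \<Rightarrow> real \<Rightarrow> real" where "cl2 n x = max (- real n) (min x (real n))"

lemma cl2_mono: "x \<le> y \<Longrightarrow> cl2 n x \<le> cl2 n y" by (simp add: cl2_def)
lemma cl2_abs: "\<bar>cl2 n x\<bar> \<le> \<bar>x\<bar>" by (simp add: cl2_def)
lemma cl2_lo: "- real n \<le> cl2 n x" by (simp add: cl2_def)
lemma cl2_hi: "cl2 n x \<le> real n" by (simp add: cl2_def)

lemma cl2_absn: "\<bar>cl2 n x\<bar> \<le> real n" by (simp add: cl2_def)

lemma cl2_nn: "0 \<le> cl2 n x + real n" by (simp add: cl2_def)
lemma cl2_le2: "cl2 n x + real n \<le> 2 * real n" by (simp add: cl2_def)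

lemma cl2_lim: "(\<lambda>n. cl2 n x) \<longlonglongrightarrow> x"
proof -
  obtain N :: nat where N: "\<bar>x\<bar> \<le> real N" using real_arch_simple by blast
  show ?thesis
  proof (rule tendsto_eventually)
    show "\<forall>\<^sub>F n in sequentially. cl2 n x = x"
    proof (rule eventually_sequentiallyI[of N])
      fix n assume "N \<le> n"
      then have "\<bar>x\<bar> \<le> real n" using N by linarith
      then show "cl2 n x = x" by (simp add: cl2_def)
    qed
  qed
qed

lemma L2:
  fixes f g :: "('v \<Rightarrow> real) \<Rightarrow> real"
  assumes P: "PNA D \<mu> {A, B}" and AB: "A \<noteq> B"
  and mono: "(mono_on (Mem A) f \<and> mono_on (Mem B) g) \<or> (antimono_on' (Mem A) f \<and> antimono_on' (Mem B) g)"
  and i1: "integrable (measure_pmf \<mu>) (\<lambda>m. f (restr A m))"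
  and i2: "integrable (measure_pmf \<mu>) (\<lambda>m. g (restr B m))"
  and i3: "integrable (measure_pmf \<mu>) (\<lambda>m. f (restr A m) * g (restr B m))"
  shows "measure_pmf.expectation \<mu> (\<lambda>m. f (restr A m) * g (restr B m))
            \<le> measure_pmf.expectation \<mu> (\<lambda>m. f (restr A m)) *
              measure_pmf.expectation \<mu> (\<lambda>m. g (restr B m))"
proof -
  define a where "a n m = cl2 n (f (restr A m))" for n m
  define b where "b n m = cl2 n (g (restr B m))" for n m
  have ia: "integrable (measure_pmf \<mu>) (a n)" for n
    by (rule pmf_integrable_bound[where B="real n"]) (simp add: a_def cl2_absn)
  have ib: "integrable (measure_pmf \<mu>) (b n)" for n
    by (rule pmf_integrable_bound[where B="real n"]) (simp add: b_def cl2_absn)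
  have iab: "integrable (measure_pmf \<mu>) (\<lambda>m. a n m * b n m)" for n
    by (rule pmf_integrable_bound[where B="real n * real n"])
      (simp add: a_def b_def abs_mult mult_mono' cl2_absn)
  have ineq: "measure_pmf.expectation \<mu> (\<lambda>m. a n m * b n m)
     \<le> measure_pmf.expectation \<mu> (a n) * measure_pmf.expectation \<mu> (b n)" for n
  proof -
    define F where "F x = cl2 n (f x) + real n" for x
    define G where "G x = cl2 n (g x) + real n" for x
    have moFG: "(mono_on (Mem A) F \<and> mono_on (Mem B) G) \<or> (antimono_on' (Mem A) F \<and> antimono_on' (Mem B) G)"
      using mono unfolding antimono_on'_def monotone_on_def F_def G_def by (auto intro: cl2_mono)
    have k: "measure_pmf.expectation \<mu> (\<lambda>m. F (restr A m) * G (restr B m))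
            \<le> measure_pmf.expectation \<mu> (\<lambda>m. F (restr A m)) *
              measure_pmf.expectation \<mu> (\<lambda>m. G (restr B m))"
      by (rule Kreal[OF P AB _ _ _ _ moFG, where c="2 * real n"])
         (simp_all add: F_def G_def cl2_nn cl2_le2)
    have eF: "measure_pmf.expectation \<mu> (\<lambda>m. F (restr A m)) = measure_pmf.expectation \<mu> (a n) + real n"
      unfolding F_def a_def[symmetric] using ia by simp
    have eG: "measure_pmf.expectation \<mu> (\<lambda>m. G (restr B m)) = measure_pmf.expectation \<mu> (b n) + real n"
      unfolding G_def b_def[symmetric] using ib by simp
    have funeq: "(\<lambda>m. F (restr A m) * G (restr B m)) = (\<lambda>m. a n m * b n m + (real n * a n m + (real n * b n m + real n * real n)))"
      by (auto simp: F_def G_def a_def b_def fun_eq_iff algebra_simps)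
    have eFG: "measure_pmf.expectation \<mu> (\<lambda>m. F (restr A m) * G (restr B m)) =
       measure_pmf.expectation \<mu> (\<lambda>m. a n m * b n m) + (real n * measure_pmf.expectation \<mu> (a n) + (real n * measure_pmf.expectation \<mu> (b n) + real n * real n))"
      unfolding funeq using ia ib iab by simp
    show ?thesis using k unfolding eF eG eFG by (simp add: algebra_simps)
  qed
  have l1: "(\<lambda>n. measure_pmf.expectation \<mu> (a n)) \<longlonglongrightarrow> measure_pmf.expectation \<mu> (\<lambda>m. f (restr A m))"
    by (rule integral_dominated_convergence[where w="\<lambda>m. \<bar>f (restr A m)\<bar>"])
       (auto simp: a_def cl2_abs cl2_lim i1)
  have l2: "(\<lambda>n. measure_pmf.expectation \<mu> (b n)) \<longlonglongrightarrow> measure_pmf.expectation \<mu> (\<lambda>m. g (restr B m))"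
    by (rule integral_dominated_convergence[where w="\<lambda>m. \<bar>g (restr B m)\<bar>"])
       (auto simp: b_def cl2_abs cl2_lim i2)
  have l3: "(\<lambda>n. measure_pmf.expectation \<mu> (\<lambda>m. a n m * b n m)) \<longlonglongrightarrow> measure_pmf.expectation \<mu> (\<lambda>m. f (restr A m) * g (restr B m))"
  proof (rule integral_dominated_convergence[where w="\<lambda>m. \<bar>f (restr A m)\<bar> * \<bar>g (restr B m)\<bar>"])
    show "integrable (measure_pmf \<mu>) (\<lambda>m. \<bar>f (restr A m)\<bar> * \<bar>g (restr B m)\<bar>)"
      using integrable_abs[OF i3] by (simp add: abs_mult)
  qed (auto simp: a_def b_def abs_mult cl2_abs intro!: mult_mono' tendsto_mult cl2_lim)
  show ?thesis
    by (rule LIMSEQ_le[OF l3 tendsto_mult[OF l1 l2]]) (use ineq in blast)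
qed




lemma NA_of_PNA:
  assumes P: "PNA D \<mu> {A, B}" and AB: "A \<noteq> B" "A \<inter> B = {}" "A \<subseteq> D" "B \<subseteq> D"
  shows "NA D \<mu> A B"
  unfolding NA_def
proof (intro conjI allI impI)
  show "A \<subseteq> D" "B \<subseteq> D" "A \<inter> B = {}" using AB by auto
  fix f g :: "('a \<Rightarrow> real) \<Rightarrow> real"
  assume h: "((mono_on (Mem A) f \<and> mono_on (Mem B) g) \<or>
             (antimono_on' (Mem A) f \<and> antimono_on' (Mem B) g)) \<and>
            (bdd_below (f ` Mem A) \<or> bdd_above (f ` Mem A)) \<and>
            (bdd_below (g ` Mem B) \<or> bdd_above (g ` Mem B)) \<and>
            integrable (measure_pmf \<mu>) (\<lambda>m. f (restr A m)) \<and>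
            integrable (measure_pmf \<mu>) (\<lambda>m. g (restr B m)) \<and>
            integrable (measure_pmf \<mu>) (\<lambda>m. f (restr A m) * g (restr B m))"
  then show "measure_pmf.expectation \<mu> (\<lambda>m. f (restr A m) * g (restr B m))
            \<le> measure_pmf.expectation \<mu> (\<lambda>m. f (restr A m)) *
              measure_pmf.expectation \<mu> (\<lambda>m. g (restr B m))"
    by (elim conjE) (rule L2[OF P AB(1)])
qed

lemma restr_empty: "restr {} m = (\<lambda>_. 0)" by (simp add: restr_def fun_eq_iff)

lemma NA_emptyA:
  assumes "B \<subseteq> D" shows "NA D \<mu> {} B"
  unfolding NA_def using assms by (simp add: restr_empty)

lemma NA_emptyB:
  assumes "A \<subseteq> D" shows "NA D \<mu> A {}"
  unfolding NA_def using assms by (simp add: restr_empty)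

lemma part2:
  assumes "\<mu> \<in> oplus S \<mu>1 T \<mu>2"
  shows "\<mu> \<in> oplus_w S \<mu>1 T \<mu>2"
proof -
  have st: "S \<inter> T = {}" using assms unfolding oplus_def by (cases "S \<inter> T = {}") auto
  then have mem: "is_dist (S \<union> T) \<mu> \<and> marg S \<mu> = \<mu>1 \<and> marg T \<mu> = \<mu>2 \<and>
         (\<forall>P Q. is_partition P \<and> \<Union>P \<subseteq> S \<and> is_partition Q \<and> \<Union>Q \<subseteq> T \<and>
                PNA S \<mu>1 P \<and> PNA T \<mu>2 Q \<longrightarrow> PNA (S \<union> T) \<mu> (P \<union> Q))"
    using assms unfolding oplus_def by simp
  then have d: "is_dist (S \<union> T) \<mu>" and m1: "marg S \<mu> = \<mu>1" and m2: "marg T \<mu> = \<mu>2"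
    and H: "\<forall>P Q. is_partition P \<and> \<Union>P \<subseteq> S \<and> is_partition Q \<and> \<Union>Q \<subseteq> T \<and>
                PNA S \<mu>1 P \<and> PNA T \<mu>2 Q \<longrightarrow> PNA (S \<union> T) \<mu> (P \<union> Q)"
    by auto
  have NA: "NA (S \<union> T) \<mu> S T"
  proof (cases "S = {}")
    case True then show ?thesis using NA_emptyA[of T "S \<union> T" \<mu>] by simp
  next
    case SF: False
    show ?thesis
    proof (cases "T = {}")
      case True then show ?thesis using NA_emptyB[of S "S \<union> T" \<mu>] by simp
    next
      case TF: False
      have p1: "PNA S \<mu>1 {S}" by (rule PNA_single[OF SF order_refl])
      have p2: "PNA T \<mu>2 {T}" by (rule PNA_single[OF TF order_refl])
      have ps: "is_partition {S}" using p1 unfolding PNA_def by (rule conjunct1)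
      have pt: "is_partition {T}" using p2 unfolding PNA_def by (rule conjunct1)
      have "PNA (S \<union> T) \<mu> ({S} \<union> {T})"
        using H[rule_format, of "{S}" "{T}"] ps pt p1 p2 by simp
      then have P: "PNA (S \<union> T) \<mu> {S, T}" by (simp add: insert_commute)
      have "S \<noteq> T" using st SF by auto
      then show ?thesis using NA_of_PNA[OF P] st by simp
    qed
  qed
  show ?thesis unfolding oplus_w_def using d NA m1 m2 st by simp
qed

theorem mainTheorem5:
  fixes S T :: "'v set" and \<mu>1 \<mu>2 :: "('v \<Rightarrow> real) pmf"
  assumes "is_dist S \<mu>1" and "is_dist T \<mu>2"
  shows "oplus_s S \<mu>1 T \<mu>2 \<subseteq> oplus S \<mu>1 T \<mu>2 \<and> oplus S \<mu>1 T \<mu>2 \<subseteq> oplus_w S \<mu>1 T \<mu>2"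
  using part1 part2 by blast


end
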